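(* Assume the loss $f(\cdot,z)$ is $\beta$-smooth for all $z\in\mathcal{Z}$. Consider full-batch GD with $T$ iterations and learning rates satisfying $\eta_t\le C/t\le 1/\beta$ for all $t\le T+1$. Let $\epsilon=\beta C<1$ and $\bar C(\epsilon,T)=\min\{\epsilon+1/2,\ \epsilon\log(eT)\}$. Then $$|\epsilon_{\mathrm{gen}}|\le\frac{4\sqrt2}{n}\sqrt{(\epsilon_{\mathrm{opt}}+\epsilon_{\mathbf{c}})\,\epsilon_{\mathrm{path}}}\,(eT)^{\epsilon}\,\bar C^{1/2}(\epsilon,T)+8\frac{\epsilon_{\mathrm{path}}}{n^2}(eT)^{2\epsilon}\bar C(\epsilon,T)\le\frac{4\sqrt3\,(eT)^{\epsilon}}{n}\sqrt{(\epsilon_{\mathrm{opt}}+\epsilon_{\mathbf{c}})\,\epsilon_{\mathrm{path}}}+12\frac{(eT)^{2\epsilon}}{n^2}\epsilon_{\mathrm{path}}.$$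
   Context: Let $\mathcal{D}$ be a distribution on $\mathcal{Z}$ and $z_1,\dots,z_n,z_i'$ i.i.d. from $\mathcal{D}$; $S=(z_1,\dots,z_n)$. The loss $f:\mathbb{R}^d\times\mathcal{Z}\to[0,\infty)$ is non-negative and $\beta$-smooth ($\|\nabla f(w,z)-\nabla f(u,z)\|_2\le\beta\|w-u\|_2$), possibly nonconvex. $R(w)=\mathbb{E}_{Z\sim\mathcal{D}}[f(w,Z)]$, $R_S(w)=\frac1n\sum_j f(w,z_j)$, $W^*_S$ a minimizer of $R_S$ (assumed to exist). Full-batch GD: from a fixed $W_1$, $W_{t+1}=W_t-\frac{\eta_t}{n}\sum_{j=1}^n\nabla f(W_t,z_j)$, $t=1,\dots,T$, output $A(S)=W_{T+1}$. Definitions: $\epsilon_{\mathrm{gen}}=\mathbb{E}[R(A(S))-R_S(A(S))]$; $\epsilon_{\mathrm{opt}}=\mathbb{E}[R_S(A(S))-R_S(W^*_S)]$; $\epsilon_{\mathbf{c}}=\mathbb{E}[R_S(W^*_S)]$; $\epsilon_{\mathrm{path}}=\sum_{t=1}^T\eta_t\mathbb{E}[\|\nabla f(W_t,z_i)\|_2^2]$ for a fixed index $i$. *)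

theory Defs
  imports "HOL-Probability.Probability"
begin

definition sample_space :: "'z measure \<Rightarrow> nat \<Rightarrow> (nat \<Rightarrow> 'z) measure" where
  "sample_space D n = PiM {..<n} (\<lambda>_. D)"

definition emp_risk :: "('a \<Rightarrow> 'z \<Rightarrow> real) \<Rightarrow> nat \<Rightarrow> (nat \<Rightarrow> 'z) \<Rightarrow> 'a \<Rightarrow> real" where
  "emp_risk f n S w = (\<Sum>j<n. f w (S j)) / real n"

definition pop_risk :: "'z measure \<Rightarrow> ('a \<Rightarrow> 'z \<Rightarrow> real) \<Rightarrow> 'a \<Rightarrow> real" where
  "pop_risk D f w = (\<integral>z. f w z \<partial>D)"

text \<open>Full-batch GD iterates, with g the gradient of f in w.
  gd_iter eta g W1 n S k is the paper's W_{k+1}; so gd_iter ... 0 = W_1 and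
  W_{t+1} = W_t - (eta_t / n) * sum_j g(W_t, z_j).\<close>
primrec gd_iter :: "(nat \<Rightarrow> real) \<Rightarrow> ('a::real_vector \<Rightarrow> 'z \<Rightarrow> 'a) \<Rightarrow> 'a \<Rightarrow> nat
    \<Rightarrow> (nat \<Rightarrow> 'z) \<Rightarrow> nat \<Rightarrow> 'a" where
  "gd_iter eta g W1 n S 0 = W1"
| "gd_iter eta g W1 n S (Suc k) =
     gd_iter eta g W1 n S k
       - (eta (Suc k) / real n) *\<^sub>R (\<Sum>j<n. g (gd_iter eta g W1 n S k) (S j))"

definition gd_output :: "(nat \<Rightarrow> real) \<Rightarrow> ('a::real_vector \<Rightarrow> 'z \<Rightarrow> 'a) \<Rightarrow> 'a \<Rightarrow> nat
    \<Rightarrow> nat \<Rightarrow> (nat \<Rightarrow> 'z) \<Rightarrow> 'a" where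
  "gd_output eta g W1 n T S = gd_iter eta g W1 n S T"

definition eps_gen where
  "eps_gen D f g W1 eta n T =
     (\<integral>S. pop_risk D f (gd_output eta g W1 n T S) - emp_risk f n S (gd_output eta g W1 n T S)
        \<partial>sample_space D n)"

definition eps_opt where
  "eps_opt D f g W1 eta n T wstar =
     (\<integral>S. emp_risk f n S (gd_output eta g W1 n T S) - emp_risk f n S (wstar S)
        \<partial>sample_space D n)"

definition eps_c where
  "eps_c D f n wstar = (\<integral>S. emp_risk f n S (wstar S) \<partial>sample_space D n)"

definition eps_path where
  "eps_path D (g :: 'a::real_normed_vector \<Rightarrow> 'z \<Rightarrow> 'a) W1 eta n T i =
     (\<Sum>t\<in>{1..T}. eta t *
        (\<integral>S. (norm (g (gd_iter eta g W1 n S (t - 1)) (S i)))\<^sup>2 \<partial>sample_space D n))"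

definition cbar :: "real \<Rightarrow> nat \<Rightarrow> real" where
  "cbar eps T = min (eps + 1/2) (eps * ln (exp 1 * real T))"

end

theory Submission
  imports Defs
begin

lemma carath_meas:
  fixes h :: "'a::{metric_space,second_countable_topology} \<Rightarrow> 'z \<Rightarrow> 'b::{real_normed_vector,second_countable_topology}"
  assumes hm: "\<And>w. h w \<in> borel_measurable D"
    and hc: "\<And>z. continuous_on UNIV (\<lambda>w. h w z)"
    and W: "W \<in> borel_measurable M" and Z: "Z \<in> measurable M D"
  shows "(\<lambda>x. h (W x) (Z x)) \<in> borel_measurable M"
proof -
  obtain F where F: "\<And>i. simple_function M (F i)" "\<And>x. x\<in>space M \<Longrightarrow> (\<lambda>i. F i x) \<longlonglongrightarrow> W x"
    using borel_measurable_implies_sequence_metric[OF W] by blast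
  have m: "(\<lambda>x. h (F i x) (Z x)) \<in> borel_measurable M" for i
  proof (rule measurable_compose_countable'[where I="F i ` space M"])
    show "(\<lambda>x. h v (Z x)) \<in> borel_measurable M" for v
      using measurable_compose[OF Z hm] .
    show "F i \<in> measurable M (count_space (F i ` space M))"
      using F(1)[of i] unfolding simple_function_def
      by (subst measurable_count_space_eq2) auto
    show "countable (F i ` space M)"
      using F(1)[of i] unfolding simple_function_def by (simp add: countable_finite)
  qed
  show ?thesis
  proof (rule borel_measurable_LIMSEQ_metric[OF m])
    fix x assume x: "x \<in> space M"
    have "isCont (\<lambda>w. h w (Z x)) (W x)"
      using hc[of "Z x"] by (simp add: continuous_on_eq_continuous_at)
    then show "(\<lambda>i. h (F i x) (Z x)) \<longlonglongrightarrow> h (W x) (Z x)"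
      using F(2)[OF x] isCont_tendsto_compose by blast
  qed
qed

lemma lip_cont:
  fixes g :: "'a::real_normed_vector \<Rightarrow> 'z \<Rightarrow> 'b::real_normed_vector"
  assumes "\<And>w u. norm (g w z - g u z) \<le> beta * norm (w - u)" "beta \<ge> 0"
  shows "continuous_on UNIV (\<lambda>w. g w z)"
proof -
  have "beta-lipschitz_on UNIV (\<lambda>w. g w z)"
    using assms by (intro lipschitz_onI) (auto simp: dist_norm)
  then show ?thesis by (rule lipschitz_on_continuous_on)
qed

lemma gd_meas:
  fixes g :: "'a::euclidean_space \<Rightarrow> 'z \<Rightarrow> 'a"
  assumes gm: "\<And>w. g w \<in> borel_measurable D"
    and gc: "\<And>z. continuous_on UNIV (\<lambda>w. g w z)"
  shows "(\<lambda>S. gd_iter eta g W1 n S k) \<in> borel_measurable (Pi\<^sub>M {..<n} (\<lambda>_. D))"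
proof (induction k)
  case 0 then show ?case by simp
next
  case (Suc k)
  have "(\<lambda>S. g (gd_iter eta g W1 n S k) (S j)) \<in> borel_measurable (Pi\<^sub>M {..<n} (\<lambda>_. D))" if "j \<in> {..<n}" for j
    using that by (intro carath_meas[OF gm gc Suc]) (rule measurable_component_singleton)
  then show ?case using Suc by simp
qed

lemma ln_ge_inv: fixes x :: real assumes "x > 0" shows "ln x \<ge> 1 - 1/x"
proof -
  have "ln (1/x) \<le> 1/x - 1" using assms by (intro ln_le_minus_one) auto
  then show ?thesis using assms by (simp add: ln_div)
qed

lemma powr_ge_lin: fixes x a :: real assumes "x > 0" shows "x powr a \<ge> 1 + a * ln x"
  using assms exp_ge_add_one_self[of "a * ln x"] by (simp add: powr_def)

lemma sum_inv_le_ln: "T \<ge> 1 \<Longrightarrow> (\<Sum>t\<in>{1..T}. 1 / real t) \<le> 1 + ln (real T)"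
proof (induction T rule: dec_induct)
  case base then show ?case by simp
next
  case (step m)
  have "1 / real (Suc m) \<le> ln (real (Suc m)) - ln (real m)"
  proof -
    have "ln (real (Suc m) / real m) \<ge> 1 - 1 / (real (Suc m) / real m)"
      using step by (intro ln_ge_inv) auto
    moreover have "1 - 1 / (real (Suc m) / real m) = 1 / real (Suc m)"
      using step by (simp add: field_simps)
    ultimately show ?thesis using step by (simp add: ln_div)
  qed
  then show ?case using step by simp
qed

lemma prod_le_powr:
  fixes e :: real assumes e: "e \<ge> 0" and t: "t \<ge> 1"
  shows "T \<ge> t \<Longrightarrow> (\<Prod>k\<in>{t<..T}. 1 + e / real k) \<le> (real T / real t) powr e"
proof (induction T rule: dec_induct)
  case base then show ?case using t by simp
next
  case (step m)
  have m: "m \<ge> 1" using step t by simp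
  have split: "{t<..Suc m} = insert (Suc m) {t<..m}" using step by auto
  have A: "1 + e / real (Suc m) \<le> (real (Suc m) / real m) powr e"
  proof -
    have "ln (real (Suc m) / real m) \<ge> 1 - 1 / (real (Suc m) / real m)"
      using m by (intro ln_ge_inv) auto
    moreover have "1 - 1 / (real (Suc m) / real m) = 1 / real (Suc m)"
      using m by (simp add: field_simps)
    ultimately have "e / real (Suc m) \<le> e * ln (real (Suc m) / real m)"
      using e by (metis mult_left_mono times_divide_eq_right mult_1_right)
    then show ?thesis using powr_ge_lin[of "real (Suc m) / real m" e] m by simp
  qed
  have B: "(real (Suc m) / real m) powr e * (real m / real t) powr e = (real (Suc m) / real t) powr e"
    using m t by (simp add: powr_mult[symmetric])
  have "(1 + e / real (Suc m)) * (\<Prod>k\<in>{t<..m}. 1 + e / real k) \<le> (1 + e / real (Suc m)) * (real m / real t) powr e"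
    using step.IH e by (intro mult_left_mono) auto
  also have "\<dots> \<le> (real (Suc m) / real m) powr e * (real m / real t) powr e"
    using A by (intro mult_right_mono) auto
  finally show ?case using step split B by simp
qed

lemma powr_tele:
  fixes a :: real assumes a: "a > 0" and t: "t \<ge> 2"
  shows "real t powr (-1 - a) \<le> (real (t - 1) powr (-a) - real t powr (-a)) / a"
proof -
  define x where "x = real t / real (t - 1)"
  define P where "P = real t powr (-a)"
  have P0: "P > 0" unfolding P_def using t by simp
  have t1: "real (t - 1) > 0" "real (t-1) = real t - 1" using t by auto
  have x0: "x > 0" using t1 t unfolding x_def by auto
  have "ln x \<ge> 1 - 1/x" using x0 by (rule ln_ge_inv)
  moreover have "1 - 1/x = 1 / real t" using t1 t unfolding x_def by (simp add: field_simps)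
  ultimately have "a * (1 / real t) \<le> a * ln x" using a by (intro mult_left_mono) auto
  then have A: "a / real t \<le> x powr a - 1" using powr_ge_lin[OF x0, of a] by simp
  have "real (t - 1) = real t / x" using t1 t unfolding x_def by (simp add: field_simps)
  then have B: "real (t - 1) powr (-a) = P * x powr a"
  proof -
    have "(real t / x) powr (-a) = real t powr (-a) / x powr (-a)"
      using x0 by (intro powr_divide; simp)
    moreover have "x powr (-a) = 1 / x powr a" by (simp add: powr_minus_divide)
    ultimately show ?thesis unfolding P_def using \<open>real (t - 1) = real t / x\<close> x0 by simp
  qed
  have C: "real t powr (-1 - a) = P / real t"
    unfolding P_def using t by (simp add: powr_diff powr_minus_divide)
  have "P * (a / real t) \<le> P * (x powr a - 1)" using A P0 by (intro mult_left_mono) auto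
  then have "P / real t \<le> (P * x powr a - P) / a" using a by (simp add: field_simps)
  then show ?thesis using B C P_def by simp
qed

lemma sum_powr_le: fixes a :: real assumes a: "a > 0"
  shows "(\<Sum>t\<in>{1..T}. real t powr (-1 - a)) \<le> 1 + 1/a"
proof -
  have "T \<ge> 1 \<Longrightarrow> (\<Sum>t\<in>{1..T}. real t powr (-1 - a)) \<le> 1 + (1 - real T powr (-a)) / a" for T
  proof (induction T rule: dec_induct)
    case base then show ?case by simp
  next
    case (step m)
    have "real (Suc m) powr (-1 - a) \<le> (real m powr (-a) - real (Suc m) powr (-a)) / a"
      using powr_tele[OF a, of "Suc m"] step by simp
    then show ?case using step a by (simp add: field_simps)
  qed
  moreover have "(1 - real T powr (-a)) / a \<le> 1 / a" using a by (simp add: divide_right_mono)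
  moreover have "T = 0 \<Longrightarrow> ?thesis" using a by simp
  ultimately show ?thesis by (cases "T \<ge> 1") force+
qed

lemma taylor1:
  fixes F :: "'a::euclidean_space \<Rightarrow> real" and G :: "'a \<Rightarrow> 'a"
  assumes grad: "\<And>w. (F has_derivative (\<lambda>h. G w \<bullet> h)) (at w)"
    and lip: "\<And>w u. norm (G w - G u) \<le> beta * norm (w - u)" and beta: "beta \<ge> 0"
  shows "\<bar>F (w + d) - F w - G w \<bullet> d\<bar> \<le> beta * (norm d)\<^sup>2"
proof -
  define psi where "psi s = F (w + s *\<^sub>R d) - s * (G w \<bullet> d)" for s :: real
  have der: "(psi has_derivative (\<lambda>h. G (w + s *\<^sub>R d) \<bullet> (h *\<^sub>R d) - h * (G w \<bullet> d))) (at s)" for s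
  proof -
    have "((\<lambda>s. w + s *\<^sub>R d) has_derivative (\<lambda>h. h *\<^sub>R d)) (at s)"
      by (auto intro!: derivative_eq_intros)
    from has_derivative_compose[OF this grad]
    have "((\<lambda>s. F (w + s *\<^sub>R d)) has_derivative (\<lambda>h. G (w + s *\<^sub>R d) \<bullet> (h *\<^sub>R d))) (at s)"
      by (simp add: o_def)
    then show ?thesis unfolding psi_def
      by (auto intro!: derivative_eq_intros)
  qed
  have cont: "continuous_on {0..1} psi"
    using der has_derivative_continuous by (metis continuous_at_imp_continuous_on)
  obtain s where s: "s \<in> {0<..<1}"
    and b: "norm (psi 1 - psi 0) \<le> norm (G (w + s *\<^sub>R d) \<bullet> ((1 - 0) *\<^sub>R d) - (1 - 0) * (G w \<bullet> d))"
    using mvt_general[of 0 1 psi, OF _ cont der] by auto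
  have "\<bar>G (w + s *\<^sub>R d) \<bullet> d - G w \<bullet> d\<bar> = \<bar>(G (w + s *\<^sub>R d) - G w) \<bullet> d\<bar>"
    by (simp add: inner_diff_left)
  also have "\<dots> \<le> norm (G (w + s *\<^sub>R d) - G w) * norm d" by (rule Cauchy_Schwarz_ineq2)
  also have "\<dots> \<le> beta * norm (s *\<^sub>R d) * norm d"
    using lip[of "w + s *\<^sub>R d" w] by (intro mult_right_mono) auto
  also have "\<dots> \<le> beta * (norm d)\<^sup>2"
  proof -
    have "norm (s *\<^sub>R d) \<le> norm d" using s by (simp add: mult_left_le_one_le)
    then have "beta * norm (s *\<^sub>R d) * norm d \<le> beta * norm d * norm d"
      using beta by (intro mult_right_mono mult_left_mono) auto
    then show ?thesis by (simp add: power2_eq_square mult.assoc)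
  qed
  finally show ?thesis using b by (simp add: psi_def)
qed

lemma taylor_abs:
  fixes F :: "'a::euclidean_space \<Rightarrow> real" and G :: "'a \<Rightarrow> 'a"
  assumes grad: "\<And>w. (F has_derivative (\<lambda>h. G w \<bullet> h)) (at w)"
    and lip: "\<And>w u. norm (G w - G u) \<le> beta * norm (w - u)" and beta: "beta \<ge> 0"
  shows "\<bar>F w' - F w\<bar> \<le> norm (G w) * norm (w' - w) + beta * (norm (w' - w))\<^sup>2"
proof -
  have "\<bar>F (w + (w' - w)) - F w - G w \<bullet> (w' - w)\<bar> \<le> beta * (norm (w' - w))\<^sup>2"
    by (rule taylor1[OF grad lip beta])
  moreover have "\<bar>G w \<bullet> (w' - w)\<bar> \<le> norm (G w) * norm (w' - w)" by (rule Cauchy_Schwarz_ineq2)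
  ultimately show ?thesis by simp
qed

lemma self_bound:
  fixes F :: "'a::euclidean_space \<Rightarrow> real" and G :: "'a \<Rightarrow> 'a"
  assumes grad: "\<And>w. (F has_derivative (\<lambda>h. G w \<bullet> h)) (at w)"
    and lip: "\<And>w u. norm (G w - G u) \<le> beta * norm (w - u)" and beta: "beta > 0"
    and nn: "\<And>w. F w \<ge> 0"
  shows "(norm (G w))\<^sup>2 \<le> 4 * beta * F w"
proof -
  define d where "d = - (1 / (2 * beta)) *\<^sub>R G w"
  have "\<bar>F (w + d) - F w - G w \<bullet> d\<bar> \<le> beta * (norm d)\<^sup>2"
    using beta by (intro taylor1[OF grad lip]) auto
  then have A: "F (w + d) - F w - G w \<bullet> d \<le> beta * (norm d)\<^sup>2" by (rule abs_le_D1)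
  have e2: "G w \<bullet> d = - (1 / (2 * beta)) * (norm (G w))\<^sup>2"
    unfolding d_def by (simp add: power2_norm_eq_inner)
  have e3: "(norm d)\<^sup>2 = (1 / (2 * beta))\<^sup>2 * (norm (G w))\<^sup>2"
    unfolding d_def using beta by (simp add: power_divide)
  from A have "F (w + d) - F w - (- (1 / (2 * beta)) * (norm (G w))\<^sup>2) \<le> beta * ((1 / (2 * beta))\<^sup>2 * (norm (G w))\<^sup>2)"
    unfolding e2 e3 .
  moreover have "F (w + d) \<ge> 0" by (rule nn)
  ultimately have "(1 / (2 * beta)) * (norm (G w))\<^sup>2 - beta * ((1 / (2 * beta))\<^sup>2 * (norm (G w))\<^sup>2) \<le> F w"
    by linarith
  moreover have "(1 / (2 * beta)) * (norm (G w))\<^sup>2 - beta * ((1 / (2 * beta))\<^sup>2 * (norm (G w))\<^sup>2)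
      = (norm (G w))\<^sup>2 / (4 * beta)"
    using beta by (simp add: field_simps power2_eq_square)
  ultimately have "(norm (G w))\<^sup>2 / (4 * beta) \<le> F w" by simp
  then show ?thesis using beta by (simp add: pos_divide_le_eq mult.commute mult.left_commute)
qed

lemma unroll:
  fixes d e c :: "nat \<Rightarrow> real"
  assumes d0: "d 0 \<le> 0" and c: "\<And>k. 1 \<le> k \<Longrightarrow> k \<le> K \<Longrightarrow> c k \<ge> 0"
    and step: "\<And>k. k < K \<Longrightarrow> d (Suc k) \<le> (1 + c (Suc k)) * d k + e (Suc k)"
  shows "k \<le> K \<Longrightarrow> d k \<le> (\<Sum>t\<in>{1..k}. e t * (\<Prod>m\<in>{t<..k}. 1 + c m))"
proof (induction k)
  case 0 then show ?case using d0 by simp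
next
  case (Suc k)
  have "d (Suc k) \<le> (1 + c (Suc k)) * d k + e (Suc k)" using step Suc by simp
  also have "\<dots> \<le> (1 + c (Suc k)) * (\<Sum>t\<in>{1..k}. e t * (\<Prod>m\<in>{t<..k}. 1 + c m)) + e (Suc k)"
    using Suc c[of "Suc k"] by (intro add_right_mono mult_left_mono) auto
  also have "\<dots> = (\<Sum>t\<in>{1..Suc k}. e t * (\<Prod>m\<in>{t<..Suc k}. 1 + c m))"
  proof -
    have "(\<Prod>m\<in>{t<..Suc k}. 1 + c m) = (1 + c (Suc k)) * (\<Prod>m\<in>{t<..k}. 1 + c m)" if "t \<le> k" for t
    proof -
      have "{t<..Suc k} = insert (Suc k) {t<..k}" using that by auto
      then show ?thesis by simp
    qed
    then have "(\<Sum>t\<in>{1..k}. e t * (\<Prod>m\<in>{t<..Suc k}. 1 + c m))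
        = (1 + c (Suc k)) * (\<Sum>t\<in>{1..k}. e t * (\<Prod>m\<in>{t<..k}. 1 + c m))"
      by (simp add: sum_distrib_left algebra_simps)
    then show ?thesis by simp
  qed
  finally show ?case .
qed

lemma gd_perm:
  assumes pi: "bij_betw p {..<n} {..<n}" and S: "\<And>j. j < n \<Longrightarrow> S' j = S (p j)"
  shows "gd_iter eta g W1 n S' k = gd_iter eta g W1 n S k"
proof (induction k)
  case 0 then show ?case by simp
next
  case (Suc k)
  have "(\<Sum>j<n. g w (S' j)) = (\<Sum>j<n. g w (S j))" for w
  proof -
    have "(\<Sum>j<n. g w (S' j)) = (\<Sum>j<n. g w (S (p j)))" using S by simp
    also have "\<dots> = (\<Sum>j<n. g w (S j))" using sum.reindex_bij_betw[OF pi, of "\<lambda>j. g w (S j)"] by simp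
    finally show ?thesis .
  qed
  then show ?case using Suc by simp
qed

lemma gd_step:
  fixes g :: "'a::real_normed_vector \<Rightarrow> 'z \<Rightarrow> 'a"
  assumes smooth: "\<And>w u z. norm (g w z - g u z) \<le> beta * norm (w - u)" and beta: "beta \<ge> 0"
    and i: "i < n" and S: "\<And>j. j < n \<Longrightarrow> j \<noteq> i \<Longrightarrow> S' j = S j" and et: "eta (Suc k) \<ge> 0"
  shows "norm (gd_iter eta g W1 n S (Suc k) - gd_iter eta g W1 n S' (Suc k))
     \<le> (1 + beta * eta (Suc k)) * norm (gd_iter eta g W1 n S k - gd_iter eta g W1 n S' k)
        + eta (Suc k) / real n * (norm (g (gd_iter eta g W1 n S k) (S i)) + norm (g (gd_iter eta g W1 n S' k) (S' i)))"
proof -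
  define w where "w = gd_iter eta g W1 n S k"
  define w' where "w' = gd_iter eta g W1 n S' k"
  define e where "e = eta (Suc k)"
  define b where "b = norm (g w (S i)) + norm (g w' (S' i))"
  have n0: "real n > 0" using i by simp
  have e0: "e \<ge> 0" using et unfolding e_def .
  have "gd_iter eta g W1 n S (Suc k) - gd_iter eta g W1 n S' (Suc k)
      = (w - w') - (e / real n) *\<^sub>R (\<Sum>j<n. g w (S j) - g w' (S' j))"
    unfolding w_def w'_def e_def by (simp add: sum_subtractf algebra_simps)
  then have "norm (gd_iter eta g W1 n S (Suc k) - gd_iter eta g W1 n S' (Suc k))
      \<le> norm (w - w') + (e / real n) * norm (\<Sum>j<n. g w (S j) - g w' (S' j))"
  proof -
    have "norm ((w - w') - (e / real n) *\<^sub>R (\<Sum>j<n. g w (S j) - g w' (S' j)))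
       \<le> norm (w - w') + norm ((e / real n) *\<^sub>R (\<Sum>j<n. g w (S j) - g w' (S' j)))"
      by (rule norm_triangle_ineq4)
    moreover have "norm ((e / real n) *\<^sub>R (\<Sum>j<n. g w (S j) - g w' (S' j))) = (e / real n) * norm (\<Sum>j<n. g w (S j) - g w' (S' j))"
      using et n0 unfolding e_def by simp
    ultimately show ?thesis using e0 \<open>gd_iter eta g W1 n S (Suc k) - gd_iter eta g W1 n S' (Suc k) = _\<close> by simp
  qed
  also have "norm (\<Sum>j<n. g w (S j) - g w' (S' j)) \<le> real n * (beta * norm (w - w')) + b"
  proof -
    have split: "{..<n} = insert i ({..<n} - {i})" using i by auto
    have "norm (\<Sum>j<n. g w (S j) - g w' (S' j)) \<le> (\<Sum>j<n. norm (g w (S j) - g w' (S' j)))"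
      by (rule norm_sum)
    also have "\<dots> = norm (g w (S i) - g w' (S' i)) + (\<Sum>j\<in>{..<n} - {i}. norm (g w (S j) - g w' (S' j)))"
      using i by (subst sum.remove[of _ i]) auto
    also have "(\<Sum>j\<in>{..<n} - {i}. norm (g w (S j) - g w' (S' j))) \<le> (\<Sum>j\<in>{..<n} - {i}. beta * norm (w - w'))"
      using S smooth by (intro sum_mono) auto
    also have "\<dots> = real (n - 1) * (beta * norm (w - w'))" using i by simp
    also have "\<dots> \<le> real n * (beta * norm (w - w'))" using beta by (intro mult_right_mono) auto
    also have "norm (g w (S i) - g w' (S' i)) \<le> b" unfolding b_def by (rule norm_triangle_ineq4)
    finally show ?thesis by simp
  qed
  then have "(e / real n) * norm (\<Sum>j<n. g w (S j) - g w' (S' j)) \<le> (e / real n) * (real n * (beta * norm (w - w')) + b)"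
    using et n0 unfolding e_def by (intro mult_left_mono) auto
  also have "\<dots> = beta * e * norm (w - w') + e / real n * b" using n0 by (simp add: field_simps)
  finally show ?thesis unfolding w_def w'_def e_def b_def by (simp add: algebra_simps)
qed

lemma sqrt_trick:
  fixes X A Dd :: real
  assumes A: "A \<ge> 0" and Dd: "Dd \<ge> 0" and H: "\<And>l. l > 0 \<Longrightarrow> X \<le> (l * A + Dd / l) / 2"
  shows "X \<le> sqrt (A * Dd)"
proof (cases "A > 0 \<and> Dd > 0")
  case True
  define l where "l = sqrt Dd / sqrt A"
  have l: "l > 0" using True unfolding l_def by simp
  have "l * A = sqrt (A * Dd)" using True unfolding l_def
    by (simp add: real_sqrt_mult field_simps)
  moreover have "Dd / l = sqrt (A * Dd)" using True unfolding l_def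
    by (simp add: real_sqrt_mult field_simps)
  ultimately show ?thesis using H[OF l] by simp
next
  case False
  then have z: "A * Dd = 0" using A Dd by auto
  show ?thesis
  proof (rule ccontr)
    assume "\<not> ?thesis"
    then have X: "X > 0" using z by simp
    show False
    proof (cases "A = 0")
      case True
      show False
      proof (cases "Dd = 0")
        case True then show False using H[of 1] X \<open>A = 0\<close> by simp
      next
        case False
        then have "Dd > 0" using Dd by simp
        have "X \<le> (Dd / (Dd / X)) / 2" using H[of "Dd / X"] X \<open>Dd > 0\<close> \<open>A = 0\<close> by simp
        then show False using X \<open>Dd > 0\<close> by simp
      qed
    next
      case False
      then have "A > 0" "Dd = 0" using A z by auto
      have "X \<le> ((X / A) * A) / 2" using H[of "X / A"] X \<open>A > 0\<close> \<open>Dd = 0\<close> by simp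
      then show False using X \<open>A > 0\<close> by simp
    qed
  qed
qed

lemma W_bound:
  fixes beta C :: real and eta :: "nat \<Rightarrow> real"
  assumes beta: "beta > 0" and C: "C > 0" and T: "T \<ge> 1"
    and eta: "\<And>t. 1 \<le> t \<Longrightarrow> t \<le> T \<Longrightarrow> 0 < eta t \<and> eta t \<le> C / real t"
  shows "beta * (\<Sum>t\<in>{1..T}. eta t * (\<Prod>m\<in>{t<..T}. 1 + beta * eta m)\<^sup>2)
           \<le> real T powr (2 * (beta * C)) * cbar (beta * C) T"
proof -
  define e where "e = beta * C"
  have e0: "e > 0" unfolding e_def using beta C by simp
  have termb: "beta * (eta t * (\<Prod>m\<in>{t<..T}. 1 + beta * eta m)\<^sup>2) \<le> e * real T powr (2 * e) * real t powr (-1 - 2 * e)"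
    if t: "t \<in> {1..T}" for t
  proof -
    have p0: "(\<Prod>m\<in>{t<..T}. 1 + beta * eta m) \<ge> 0"
    proof (intro prod_nonneg)
      fix m assume "m \<in> {t<..T}"
      then have "eta m > 0" using eta t by auto
      then have "beta * eta m > 0" using beta by simp
      then show "0 \<le> 1 + beta * eta m" by simp
    qed
    have "(\<Prod>m\<in>{t<..T}. 1 + beta * eta m) \<le> (\<Prod>m\<in>{t<..T}. 1 + e / real m)"
    proof (rule prod_mono)
      fix m assume m: "m \<in> {t<..T}"
      have "beta * eta m \<le> beta * (C / real m)" using eta[of m] m t beta by (intro mult_left_mono) auto
      then show "0 \<le> 1 + beta * eta m \<and> 1 + beta * eta m \<le> 1 + e / real m"
        using eta[of m] m t beta unfolding e_def by (auto intro!: add_nonneg_nonneg mult_nonneg_nonneg less_imp_le)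
    qed
    also have "\<dots> \<le> (real T / real t) powr e" using prod_le_powr[of e t T] e0 t by auto
    finally have "(\<Prod>m\<in>{t<..T}. 1 + beta * eta m)\<^sup>2 \<le> ((real T / real t) powr e)\<^sup>2"
      using p0 by (intro power_mono) auto
    also have "\<dots> = (real T / real t) powr (2 * e)"
      using t by (simp add: powr_add[symmetric] power2_eq_square)
    finally have P: "(\<Prod>m\<in>{t<..T}. 1 + beta * eta m)\<^sup>2 \<le> (real T / real t) powr (2 * e)" .
    have be: "beta * eta t \<le> e / real t"
    proof -
      have "beta * eta t \<le> beta * (C / real t)" using eta[of t] t beta by (intro mult_left_mono) auto
      then show ?thesis unfolding e_def by simp
    qed
    have "beta * (eta t * (\<Prod>m\<in>{t<..T}. 1 + beta * eta m)\<^sup>2) = (beta * eta t) * (\<Prod>m\<in>{t<..T}. 1 + beta * eta m)\<^sup>2"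
      by simp
    also have "\<dots> \<le> (e / real t) * (real T / real t) powr (2 * e)"
      using be P eta[of t] t beta e0 by (intro mult_mono) auto
    also have "\<dots> = e * real T powr (2 * e) * real t powr (-1 - 2 * e)"
      using t by (simp add: powr_divide powr_diff powr_minus_divide field_simps)
    finally show ?thesis .
  qed
  have "beta * (\<Sum>t\<in>{1..T}. eta t * (\<Prod>m\<in>{t<..T}. 1 + beta * eta m)\<^sup>2)
      \<le> (\<Sum>t\<in>{1..T}. e * real T powr (2 * e) * real t powr (-1 - 2 * e))"
    unfolding sum_distrib_left using termb by (intro sum_mono) auto
  also have "\<dots> = real T powr (2 * e) * (e * (\<Sum>t\<in>{1..T}. real t powr (-1 - 2 * e)))"
    by (simp add: sum_distrib_left mult_ac)
  also have "e * (\<Sum>t\<in>{1..T}. real t powr (-1 - 2 * e)) \<le> cbar e T"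
  proof -
    have "e * (\<Sum>t\<in>{1..T}. real t powr (-1 - 2 * e)) \<le> e * (1 + 1 / (2 * e))"
      using sum_powr_le[of "2 * e" T] e0 by (intro mult_left_mono) auto
    also have "\<dots> = e + 1/2" using e0 by (simp add: field_simps)
    finally have 1: "e * (\<Sum>t\<in>{1..T}. real t powr (-1 - 2 * e)) \<le> e + 1/2" .
    have "(\<Sum>t\<in>{1..T}. real t powr (-1 - 2 * e)) \<le> (\<Sum>t\<in>{1..T}. 1 / real t)"
    proof (rule sum_mono)
      fix t assume t: "t \<in> {1..T}"
      have "real t powr (-1 - 2 * e) \<le> real t powr (-1)"
        using t e0 by (intro powr_mono) auto
      then show "real t powr (-1 - 2 * e) \<le> 1 / real t" using t by (simp add: powr_minus_divide)
    qed
    also have "\<dots> \<le> 1 + ln (real T)" using sum_inv_le_ln[OF T] .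
    also have "\<dots> = ln (exp 1 * real T)" using T by (simp add: ln_mult)
    finally have 2: "e * (\<Sum>t\<in>{1..T}. real t powr (-1 - 2 * e)) \<le> e * ln (exp 1 * real T)"
      using e0 by (intro mult_left_mono) auto
    show ?thesis unfolding cbar_def using 1 2 by simp
  qed
  then have "real T powr (2 * e) * (e * (\<Sum>t\<in>{1..T}. real t powr (-1 - 2 * e))) \<le> real T powr (2 * e) * cbar e T"
    by (intro mult_left_mono) auto
  finally show ?thesis unfolding e_def .
qed

lemma final_alg:
  fixes gen optc path W beta eps cb :: real and n T :: nat
  assumes gb: "\<bar>gen\<bar> \<le> sqrt (4 * beta * optc * (4 * W * path / (real n)\<^sup>2)) + beta * (4 * W * path / (real n)\<^sup>2)"
    and bW: "beta * W \<le> real T powr (2 * eps) * cb"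
    and optc: "optc \<ge> 0" and path: "path \<ge> 0" and cb: "cb \<ge> 0" "cb \<le> 3/2" and beta: "beta > 0"
    and n: "n \<ge> 1" and T: "T \<ge> 1" and eps: "eps \<ge> 0"
  shows "\<bar>gen\<bar> \<le> (4 * sqrt 2 / real n) * sqrt (optc * path) * (exp 1 * real T) powr eps * sqrt cb
                 + 8 * (path / (real n)\<^sup>2) * (exp 1 * real T) powr (2 * eps) * cb
       \<and> (4 * sqrt 2 / real n) * sqrt (optc * path) * (exp 1 * real T) powr eps * sqrt cb
                 + 8 * (path / (real n)\<^sup>2) * (exp 1 * real T) powr (2 * eps) * cb
          \<le> (4 * sqrt 3 * (exp 1 * real T) powr eps / real n) * sqrt (optc * path)
                 + 12 * ((exp 1 * real T) powr (2 * eps) / (real n)\<^sup>2) * path"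
proof -
  define E1 where "E1 = (exp 1 * real T) powr eps"
  have E1: "E1 > 0" unfolding E1_def using T by simp
  have E2: "(exp 1 * real T) powr (2 * eps) = E1\<^sup>2"
    unfolding E1_def using T by (simp add: power2_eq_square powr_add[symmetric])
  have TE: "real T powr (2 * eps) \<le> E1\<^sup>2"
  proof -
    have "real T powr (2 * eps) \<le> (exp 1 * real T) powr (2 * eps)"
      using T eps by (intro powr_mono2) auto
    then show ?thesis using E2 by simp
  qed
  define X where "X = optc * path"
  have X: "X \<ge> 0" unfolding X_def using optc path by simp
  have n0: "real n > 0" using n by simp
  have bWE: "beta * W \<le> E1\<^sup>2 * cb"
    using bW TE cb by (meson mult_right_mono order_trans)
  have t1: "sqrt (4 * beta * optc * (4 * W * path / (real n)\<^sup>2)) \<le> 4 * E1 * sqrt X * sqrt cb / real n"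
  proof -
    have "4 * beta * optc * (4 * W * path / (real n)\<^sup>2) = 16 * X * (beta * W) / (real n)\<^sup>2"
      unfolding X_def by (simp add: field_simps)
    also have "\<dots> \<le> 16 * X * (E1\<^sup>2 * cb) / (real n)\<^sup>2"
      using bWE X by (intro divide_right_mono mult_left_mono) auto
    finally have "sqrt (4 * beta * optc * (4 * W * path / (real n)\<^sup>2)) \<le> sqrt (16 * X * (E1\<^sup>2 * cb) / (real n)\<^sup>2)"
      by simp
    also have "\<dots> = 4 * E1 * sqrt X * sqrt cb / real n"
      using E1 n0 by (simp add: real_sqrt_mult real_sqrt_divide)
    finally show ?thesis .
  qed
  have t2: "beta * (4 * W * path / (real n)\<^sup>2) \<le> 4 * path * (E1\<^sup>2 * cb) / (real n)\<^sup>2"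
  proof -
    have "beta * (4 * W * path / (real n)\<^sup>2) = 4 * path * (beta * W) / (real n)\<^sup>2" by (simp add: field_simps)
    also have "\<dots> \<le> 4 * path * (E1\<^sup>2 * cb) / (real n)\<^sup>2"
      using bWE path by (intro divide_right_mono mult_left_mono) auto
    finally show ?thesis .
  qed
  have s2: "sqrt 2 \<ge> 1" by simp
  have a1: "4 * E1 * sqrt X * sqrt cb / real n \<le> (4 * sqrt 2 / real n) * sqrt X * E1 * sqrt cb"
  proof -
    have "4 * E1 * sqrt X * sqrt cb / real n = (4 / real n) * sqrt X * E1 * sqrt cb * 1" by simp
    also have "\<dots> \<le> (4 / real n) * sqrt X * E1 * sqrt cb * sqrt 2"
      using s2 E1 X cb n0 by (intro mult_left_mono) auto
    finally show ?thesis by (simp add: mult_ac)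
  qed
  have a2: "4 * path * (E1\<^sup>2 * cb) / (real n)\<^sup>2 \<le> 8 * (path / (real n)\<^sup>2) * E1\<^sup>2 * cb"
  proof -
    define Y where "Y = path * E1\<^sup>2 * cb / (real n)\<^sup>2"
    have "0 \<le> Y" unfolding Y_def using path cb by simp
    moreover have e1: "4 * path * (E1\<^sup>2 * cb) / (real n)\<^sup>2 = 4 * Y"
      unfolding Y_def by (simp add: field_simps)
    moreover have e2: "8 * (path / (real n)\<^sup>2) * E1\<^sup>2 * cb = 8 * Y"
      unfolding Y_def by (simp add: field_simps)
    ultimately show ?thesis unfolding e1 e2 by simp
  qed
  have b1: "(4 * sqrt 2 / real n) * sqrt X * E1 * sqrt cb \<le> (4 * sqrt 3 * E1 / real n) * sqrt X"
  proof -
    have "sqrt 2 * sqrt cb \<le> sqrt 3" using cb by (simp add: real_sqrt_mult[symmetric])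
    then have "(4 * E1 / real n * sqrt X) * (sqrt 2 * sqrt cb) \<le> (4 * E1 / real n * sqrt X) * sqrt 3"
      using E1 X n0 by (intro mult_left_mono) auto
    then show ?thesis by (simp add: mult_ac)
  qed
  have b2: "8 * (path / (real n)\<^sup>2) * E1\<^sup>2 * cb \<le> 12 * (E1\<^sup>2 / (real n)\<^sup>2) * path"
  proof -
    have "(path / (real n)\<^sup>2 * E1\<^sup>2) * (8 * cb) \<le> (path / (real n)\<^sup>2 * E1\<^sup>2) * 12"
      using cb path by (intro mult_left_mono) auto
    then show ?thesis by (simp add: mult_ac)
  qed
  show ?thesis unfolding E2 E1_def[symmetric] X_def[symmetric]
    using gb t1 t2 a1 a2 b1 b2 by linarith
qed

lemma cs_step:
  fixes eta a b p :: "nat \<Rightarrow> real" and n :: real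
  assumes eta: "\<And>t. t \<in> I \<Longrightarrow> eta t \<ge> 0" and n: "n > 0"
  shows "(\<Sum>t\<in>I. eta t / n * (a t + b t) * p t)\<^sup>2
     \<le> 2 * (\<Sum>t\<in>I. eta t * (p t)\<^sup>2) / n\<^sup>2 * (\<Sum>t\<in>I. eta t * ((a t)\<^sup>2 + (b t)\<^sup>2))"
proof -
  define u where "u t = sqrt (eta t) * p t" for t
  define v where "v t = sqrt (eta t) * (a t + b t) / n" for t
  have uv: "eta t / n * (a t + b t) * p t = u t * v t" if "t \<in> I" for t
  proof -
    have "sqrt (eta t) * sqrt (eta t) = eta t" using eta[OF that] by simp
    then show ?thesis unfolding u_def v_def by (simp add: field_simps)
  qed
  have u2: "(u t)\<^sup>2 = eta t * (p t)\<^sup>2" if "t \<in> I" for t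
    unfolding u_def using eta[OF that] by (simp add: power_mult_distrib)
  have v2: "(v t)\<^sup>2 \<le> 2 / n\<^sup>2 * (eta t * ((a t)\<^sup>2 + (b t)\<^sup>2))" if "t \<in> I" for t
  proof -
    have "(v t)\<^sup>2 = eta t * (a t + b t)\<^sup>2 / n\<^sup>2"
      unfolding v_def using eta[OF that] by (simp add: power_mult_distrib power_divide)
    also have "\<dots> \<le> eta t * (2 * ((a t)\<^sup>2 + (b t)\<^sup>2)) / n\<^sup>2"
    proof -
      have "(a t + b t)\<^sup>2 \<le> 2 * ((a t)\<^sup>2 + (b t)\<^sup>2)"
      proof -
        have "0 \<le> (a t - b t)\<^sup>2" by simp
        then show ?thesis by (simp add: power2_eq_square algebra_simps)
      qed
      then show ?thesis using eta[OF that] n by (intro divide_right_mono mult_left_mono) auto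
    qed
    finally show ?thesis by (simp add: field_simps)
  qed
  have "(\<Sum>t\<in>I. eta t / n * (a t + b t) * p t)\<^sup>2 = (\<Sum>t\<in>I. u t * v t)\<^sup>2"
    using uv by simp
  also have "\<dots> \<le> (\<Sum>t\<in>I. (u t)\<^sup>2) * (\<Sum>t\<in>I. (v t)\<^sup>2)" by (rule Cauchy_Schwarz_ineq_sum)
  also have "\<dots> \<le> (\<Sum>t\<in>I. eta t * (p t)\<^sup>2) * (\<Sum>t\<in>I. 2 / n\<^sup>2 * (eta t * ((a t)\<^sup>2 + (b t)\<^sup>2)))"
    using u2 v2 eta by (intro mult_mono sum_mono sum_nonneg) auto
  also have "\<dots> = 2 * (\<Sum>t\<in>I. eta t * (p t)\<^sup>2) / n\<^sup>2 * (\<Sum>t\<in>I. eta t * ((a t)\<^sup>2 + (b t)\<^sup>2))"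
    by (simp add: sum_distrib_left[symmetric] sum_divide_distrib[symmetric])
  finally show ?thesis .
qed

theorem theorem8:
  fixes D :: "'z measure"
    and f :: "'a::euclidean_space \<Rightarrow> 'z \<Rightarrow> real"
    and g :: "'a \<Rightarrow> 'z \<Rightarrow> 'a"
    and W1 :: 'a
    and eta :: "nat \<Rightarrow> real"
    and wstar :: "(nat \<Rightarrow> 'z) \<Rightarrow> 'a"
    and beta C :: real
    and n T i :: nat
  assumes D: "prob_space D"
    and n: "n \<ge> 1" and i: "i < n" and T: "T \<ge> 1"
    and nonneg: "\<And>w z. f w z \<ge> 0"
    and grad: "\<And>w z. ((\<lambda>v. f v z) has_derivative (\<lambda>h. g w z \<bullet> h)) (at w)"
    and smooth: "\<And>w u z. norm (g w z - g u z) \<le> beta * norm (w - u)"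
    and beta_pos: "beta > 0" and C_pos: "C > 0" and eps_lt: "beta * C < 1"
    and eta: "\<And>t. 1 \<le> t \<Longrightarrow> t \<le> T + 1 \<Longrightarrow>
                 0 < eta t \<and> eta t \<le> C / real t \<and> C / real t \<le> 1 / beta"
    and f_meas: "\<And>w. f w \<in> borel_measurable D"
    and g_meas: "\<And>w. g w \<in> borel_measurable D"
    and wstar_min: "\<And>S w. S \<in> space (sample_space D n) \<Longrightarrow>
                      emp_risk f n S (wstar S) \<le> emp_risk f n S w"
    and int_pop: "integrable (sample_space D n) (\<lambda>S. pop_risk D f (gd_output eta g W1 n T S))"
    and int_emp: "integrable (sample_space D n) (\<lambda>S. emp_risk f n S (gd_output eta g W1 n T S))"
    and int_star: "integrable (sample_space D n) (\<lambda>S. emp_risk f n S (wstar S))"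
    and int_grad: "\<And>t. 1 \<le> t \<Longrightarrow> t \<le> T \<Longrightarrow>
         integrable (sample_space D n) (\<lambda>S. (norm (g (gd_iter eta g W1 n S (t - 1)) (S i)))\<^sup>2)"
  shows "let eps = beta * C;
             gen = eps_gen D f g W1 eta n T;
             opt = eps_opt D f g W1 eta n T wstar;
             c = eps_c D f n wstar;
             path = eps_path D g W1 eta n T i;
             B = (4 * sqrt 2 / real n) * sqrt ((opt + c) * path) * (exp 1 * real T) powr eps
                   * sqrt (cbar eps T)
                 + 8 * (path / (real n)\<^sup>2) * (exp 1 * real T) powr (2 * eps) * cbar eps T
         in \<bar>gen\<bar> \<le> B \<and>
            B \<le> (4 * sqrt 3 * (exp 1 * real T) powr eps / real n) * sqrt ((opt + c) * path)
                 + 12 * ((exp 1 * real T) powr (2 * eps) / (real n)\<^sup>2) * path"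
proof -
  interpret D: prob_space D by (rule D)
  define M where "M = sample_space D n"
  define N where "N = (Pi\<^sub>M {..<Suc n} (\<lambda>_. D))"
  have M_eq: "M = Pi\<^sub>M {..<n} (\<lambda>_. D)" unfolding M_def sample_space_def ..
  interpret M: prob_space M unfolding M_eq by (intro prob_space_PiM D)
  interpret N: prob_space N unfolding N_def by (intro prob_space_PiM D)
  interpret PS: product_prob_space "\<lambda>_::nat. D" by (intro product_prob_spaceI D)
  define sg where "sg k = (if k = i then n else if k = n then i else k)" for k
  define rs where "rs x = restrict x {..<n}" for x :: "nat \<Rightarrow> 'z"
  define sw where "sw x = (\<lambda>k\<in>{..<Suc n}. x (sg k))" for x :: "nat \<Rightarrow> 'z"
  have rs_m: "rs \<in> measurable N M" unfolding rs_def N_def M_eq by (rule measurable_restrict_subset) auto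
  have sw_m: "sw \<in> measurable N N" unfolding sw_def N_def using i
    by (intro measurable_restrict measurable_component_singleton) (auto simp: sg_def)
  have rs_distr: "distr N M rs = M"
    using distr_PiM_reindex[of "{..<Suc n}" "\<lambda>_. D" "\<lambda>k. k" "{..<n}"] D
    unfolding N_def M_eq rs_def by auto
  have sw_distr: "distr N N sw = N"
  proof -
    have "inj_on sg {..<Suc n}" unfolding sg_def inj_on_def by auto
    moreover have "sg \<in> {..<Suc n} \<rightarrow> {..<Suc n}" unfolding sg_def using i by auto
    ultimately show ?thesis
      using distr_PiM_reindex[of "{..<Suc n}" "\<lambda>_. D" sg "{..<Suc n}"] D
      unfolding N_def sw_def by auto
  qed
  have rsI: "integrable N (\<lambda>x. \<phi> (rs x)) \<longleftrightarrow> integrable M \<phi>" if "\<phi> \<in> borel_measurable M" for \<phi> :: "_ \<Rightarrow> real"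
    using integrable_distr_eq[OF rs_m that] rs_distr by simp
  have rsE: "(\<integral>x. \<phi> (rs x) \<partial>N) = (\<integral>S. \<phi> S \<partial>M)" if "\<phi> \<in> borel_measurable M" for \<phi> :: "_ \<Rightarrow> real"
    using integral_distr[OF rs_m that] rs_distr by simp
  have swI: "integrable N (\<lambda>x. \<phi> (sw x)) \<longleftrightarrow> integrable N \<phi>" if "\<phi> \<in> borel_measurable N" for \<phi> :: "_ \<Rightarrow> real"
    using integrable_distr_eq[OF sw_m that] sw_distr by simp
  have swE: "(\<integral>x. \<phi> (sw x) \<partial>N) = (\<integral>x. \<phi> x \<partial>N)" if "\<phi> \<in> borel_measurable N" for \<phi> :: "_ \<Rightarrow> real"
    using integral_distr[OF sw_m that] sw_distr by simp
  define A where "A S = gd_iter eta g W1 n S T" for S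
  define h where "h t S = norm (g (gd_iter eta g W1 n S (t - 1)) (S i))" for t S
  define q where "q S = f (A S) (S i)" for S
  define P where "P x = f (A (rs (sw x))) (x i)" for x
  define Q where "Q x = q (rs x)" for x
  define aA where "aA x = norm (g (A (rs x)) (x i))" for x
  define dl where "dl x = norm (A (rs (sw x)) - A (rs x))" for x
  define pp where "pp t = (\<Prod>m\<in>{t<..T}. 1 + beta * eta m)" for t
  define Wt where "Wt = (\<Sum>t\<in>{1..T}. eta t * (pp t)\<^sup>2)"
  define R where "R x = 2 * Wt / (real n)\<^sup>2 * (\<Sum>t\<in>{1..T}. eta t * ((h t (rs x))\<^sup>2 + (h t (rs (sw x)))\<^sup>2))" for x
  have gc: "\<And>z. continuous_on UNIV (\<lambda>w. g w z)"
    using beta_pos by (intro lip_cont[OF smooth]) simp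
  have fc: "\<And>z. continuous_on UNIV (\<lambda>w. f w z)"
    using grad has_derivative_continuous by (metis continuous_at_imp_continuous_on)
  have Wk_m: "(\<lambda>S. gd_iter eta g W1 n S k) \<in> borel_measurable M" for k
    unfolding M_eq by (rule gd_meas[OF g_meas gc])
  have A_m: "A \<in> borel_measurable M" unfolding A_def by (rule Wk_m)
  have comp_i: "(\<lambda>S. S i) \<in> measurable M D" unfolding M_eq using i
    by (intro measurable_component_singleton) auto
  have compN: "(\<lambda>x. x j) \<in> measurable N D" if "j < Suc n" for j
    unfolding N_def using that by (intro measurable_component_singleton) auto
  have h_m: "h t \<in> borel_measurable M" for t
    unfolding h_def by (intro measurable_compose[OF _ borel_measurable_norm] carath_meas[OF g_meas gc Wk_m comp_i])
  have q_m: "q \<in> borel_measurable M"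
    unfolding q_def by (rule carath_meas[OF f_meas fc A_m comp_i])
  have Ars_m: "(\<lambda>x. A (rs x)) \<in> borel_measurable N" by (rule measurable_compose[OF rs_m A_m])
  have Arssw_m: "(\<lambda>x. A (rs (sw x))) \<in> borel_measurable N" by (rule measurable_compose[OF sw_m Ars_m])
  have P_m: "P \<in> borel_measurable N"
    unfolding P_def using i by (intro carath_meas[OF f_meas fc Arssw_m compN]) simp
  have Q_m: "Q \<in> borel_measurable N" unfolding Q_def by (rule measurable_compose[OF rs_m q_m])
  have aA_m: "aA \<in> borel_measurable N"
    unfolding aA_def using i by (intro measurable_compose[OF _ borel_measurable_norm] carath_meas[OF g_meas gc Ars_m compN]) simp
  have dl_m: "dl \<in> borel_measurable N"
    unfolding dl_def using Ars_m Arssw_m by measurable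
  have hrs_m: "(\<lambda>x. h t (rs x)) \<in> borel_measurable N" for t by (rule measurable_compose[OF rs_m h_m])
  have hrssw_m: "(\<lambda>x. h t (rs (sw x))) \<in> borel_measurable N" for t by (rule measurable_compose[OF sw_m hrs_m])
  have R_m: "R \<in> borel_measurable N"
    unfolding R_def using hrs_m hrssw_m by measurable
  have p_m: "(\<lambda>y. f (A (rs y)) (y n)) \<in> borel_measurable N"
    by (intro carath_meas[OF f_meas fc Ars_m compN]) simp
  have rs_sw: "rs (sw x) j = rs x j" if "j < n" "j \<noteq> i" for x j
    using that unfolding rs_def sw_def sg_def by auto
  have rs_sw_i: "rs (sw x) i = x n" for x
    using i unfolding rs_def sw_def sg_def by auto
  have rs_i: "rs x i = x i" for x using i unfolding rs_def by auto
  have sw_n: "sw x n = x i" for x unfolding sw_def sg_def by auto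
  have eta_nn: "eta t \<ge> 0" if "1 \<le> t" "t \<le> T" for t using eta[of t] that by auto
  have Pt1: "\<bar>P x - Q x\<bar> \<le> aA x * dl x + beta * (dl x)\<^sup>2" for x
    unfolding P_def Q_def q_def aA_def dl_def rs_i
    using beta_pos by (intro taylor_abs[OF grad smooth]) auto
  have Pt2: "(aA x)\<^sup>2 \<le> 4 * beta * Q x" for x
    unfolding Q_def q_def aA_def rs_i
    using beta_pos nonneg by (intro self_bound[OF grad smooth]) auto
  have Pt4: "P x \<ge> 0" "Q x \<ge> 0" for x unfolding P_def Q_def q_def using nonneg by auto
  have Wt0: "Wt \<ge> 0" unfolding Wt_def using eta_nn by (intro sum_nonneg) auto
  have Pt3: "(dl x)\<^sup>2 \<le> R x" for x
  proof -
    define S where "S = rs x"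
    define S' where "S' = rs (sw x)"
    define d where "d k = norm (gd_iter eta g W1 n S k - gd_iter eta g W1 n S' k)" for k
    define e where "e t = eta t / real n * (h t S + h t S')" for t
    have "d T \<le> (\<Sum>t\<in>{1..T}. e t * (\<Prod>m\<in>{t<..T}. 1 + beta * eta m))"
    proof (rule unroll[where K=T])
      show "d 0 \<le> 0" unfolding d_def by simp
      show "0 \<le> beta * eta k" if "1 \<le> k" "k \<le> T" for k
        using eta_nn[OF that] beta_pos by simp
      show "d (Suc k) \<le> (1 + beta * eta (Suc k)) * d k + e (Suc k)" if "k < T" for k
      proof -
        have "S' j = S j" if "j < n" "j \<noteq> i" for j using rs_sw[OF that] unfolding S_def S'_def .
        moreover have "eta (Suc k) \<ge> 0" using eta_nn[of "Suc k"] that by simp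
        ultimately have "norm (gd_iter eta g W1 n S (Suc k) - gd_iter eta g W1 n S' (Suc k))
          \<le> (1 + beta * eta (Suc k)) * norm (gd_iter eta g W1 n S k - gd_iter eta g W1 n S' k)
           + eta (Suc k) / real n * (norm (g (gd_iter eta g W1 n S k) (S i)) + norm (g (gd_iter eta g W1 n S' k) (S' i)))"
          using beta_pos by (intro gd_step[OF smooth _ i]) auto
        then show ?thesis unfolding d_def e_def h_def by simp
      qed
    qed simp
    then have "dl x \<le> (\<Sum>t\<in>{1..T}. eta t / real n * (h t S + h t S') * pp t)"
      unfolding dl_def d_def A_def e_def pp_def S_def S'_def by (simp add: norm_minus_commute)
    moreover have "dl x \<ge> 0" unfolding dl_def by simp
    ultimately have "(dl x)\<^sup>2 \<le> (\<Sum>t\<in>{1..T}. eta t / real n * (h t S + h t S') * pp t)\<^sup>2"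
      by (intro power_mono) auto
    also have "\<dots> \<le> 2 * Wt / (real n)\<^sup>2 * (\<Sum>t\<in>{1..T}. eta t * ((h t S)\<^sup>2 + (h t S')\<^sup>2))"
      unfolding Wt_def using eta_nn n by (intro cs_step) auto
    finally show ?thesis unfolding R_def S_def S'_def .
  qed
  have A_out: "gd_output eta g W1 n T S = A S" for S unfolding gd_output_def A_def ..
  have fj_m: "(\<lambda>S. f (A S) (S j)) \<in> borel_measurable M" if "j < n" for j
    using that unfolding M_eq
    by (intro carath_meas[OF f_meas fc A_m[unfolded M_eq]] measurable_component_singleton) auto
  have int_emp': "integrable M (\<lambda>S. emp_risk f n S (A S))" using int_emp unfolding A_out M_def .
  have fj_int: "integrable M (\<lambda>S. f (A S) (S j))" if j: "j < n" for j
  proof (rule Bochner_Integration.integrable_bound[OF integrable_mult_right[OF int_emp', of "real n"] fj_m[OF j]])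
    show "AE S in M. norm (f (A S) (S j)) \<le> norm (real n * emp_risk f n S (A S))"
    proof (rule AE_I2)
      fix S
      have "f (A S) (S j) \<le> (\<Sum>j'<n. f (A S) (S j'))"
        using j nonneg by (intro member_le_sum) auto
      also have "\<dots> = real n * emp_risk f n S (A S)" unfolding emp_risk_def using n by simp
      finally show "norm (f (A S) (S j)) \<le> norm (real n * emp_risk f n S (A S))"
        using nonneg[of "A S" "S j"] by simp
    qed
  qed
  have q_int: "integrable M q" unfolding q_def using fj_int[OF i] .
  have sym: "(\<integral>S. f (A S) (S j) \<partial>M) = (\<integral>S. q S \<partial>M)" if j: "j < n" for j
  proof -
    define tau where "tau k = (if k = i then j else if k = j then i else k)" for k
    define perm where "perm S = (\<lambda>k\<in>{..<n}. S (tau k))" for S :: "nat \<Rightarrow> 'z"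
    have tau_in: "tau \<in> {..<n} \<rightarrow> {..<n}" unfolding tau_def using i j by auto
    have tau_inj: "inj_on tau {..<n}" unfolding tau_def inj_on_def by auto
    have tau_bij: "bij_betw tau {..<n} {..<n}"
    proof -
      have "tau ` {..<n} = {..<n}"
      proof
        show "tau ` {..<n} \<subseteq> {..<n}" using tau_in by auto
        show "{..<n} \<subseteq> tau ` {..<n}"
        proof
          fix k assume k: "k \<in> {..<n}"
          have "tau (tau k) = k" unfolding tau_def by auto
          moreover have "tau k \<in> {..<n}" using tau_in k by auto
          ultimately show "k \<in> tau ` {..<n}" by (metis image_eqI)
        qed
      qed
      then show ?thesis using tau_inj unfolding bij_betw_def by simp
    qed
    have perm_m: "perm \<in> measurable M M" unfolding perm_def M_eq using tau_in
      by (intro measurable_restrict measurable_component_singleton) auto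
    have perm_distr: "distr M M perm = M"
      using distr_PiM_reindex[of "{..<n}" "\<lambda>_. D" tau "{..<n}"] D tau_in tau_inj
      unfolding M_eq perm_def by auto
    have qp: "q (perm S) = f (A S) (S j)" for S
    proof -
      have "A (perm S) = A S" unfolding A_def
        by (rule gd_perm[OF tau_bij]) (simp add: perm_def)
      moreover have "perm S i = S j" unfolding perm_def tau_def using i by simp
      ultimately show ?thesis unfolding q_def by simp
    qed
    have "(\<integral>S. q S \<partial>M) = (\<integral>S. q S \<partial>distr M M perm)" using perm_distr by simp
    also have "\<dots> = (\<integral>S. q (perm S) \<partial>M)" by (rule integral_distr[OF perm_m q_m])
    finally show ?thesis unfolding qp by simp
  qed
  have E_emp: "(\<integral>S. emp_risk f n S (A S) \<partial>M) = (\<integral>S. q S \<partial>M)"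
  proof -
    have "(\<integral>S. emp_risk f n S (A S) \<partial>M) = (\<integral>S. (\<Sum>j<n. f (A S) (S j)) / real n \<partial>M)"
      unfolding emp_risk_def ..
    also have "\<dots> = (\<Sum>j<n. (\<integral>S. f (A S) (S j) \<partial>M)) / real n"
      using fj_int by (simp add: integral_sum)
    also have "\<dots> = (\<Sum>j<n. (\<integral>S. q S \<partial>M)) / real n" using sym by simp
    also have "\<dots> = (\<integral>S. q S \<partial>M)" using n by simp
    finally show ?thesis .
  qed
  have Q_int: "integrable N Q" unfolding Q_def using rsI[OF q_m] q_int by simp
  have Q_E: "(\<integral>x. Q x \<partial>N) = (\<integral>S. q S \<partial>M)" unfolding Q_def by (rule rsE[OF q_m])
  have h2_m: "(\<lambda>S. (h t S)\<^sup>2) \<in> borel_measurable M" for t using h_m[of t] by measurable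
  have h2_int: "integrable M (\<lambda>S. (h t S)\<^sup>2)" if "1 \<le> t" "t \<le> T" for t
    using int_grad[OF that] unfolding h_def M_def .
  have hh_int: "integrable N (\<lambda>x. (h t (rs x))\<^sup>2)" if "1 \<le> t" "t \<le> T" for t
    using rsI[OF h2_m[of t]] h2_int[OF that] by simp
  have hh_E: "(\<integral>x. (h t (rs x))\<^sup>2 \<partial>N) = (\<integral>S. (h t S)\<^sup>2 \<partial>M)" for t
    by (rule rsE[OF h2_m])
  have hh_m: "(\<lambda>x. (h t (rs x))\<^sup>2) \<in> borel_measurable N" for t using hrs_m[of t] by measurable
  have hh2_int: "integrable N (\<lambda>x. (h t (rs (sw x)))\<^sup>2)" if "1 \<le> t" "t \<le> T" for t
    using swI[OF hh_m[of t]] hh_int[OF that] by simp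
  have hh2_E: "(\<integral>x. (h t (rs (sw x)))\<^sup>2 \<partial>N) = (\<integral>S. (h t S)\<^sup>2 \<partial>M)" for t
    using swE[OF hh_m[of t]] hh_E[of t] by simp
  have R_int: "integrable N R" unfolding R_def
    using hh_int hh2_int by (intro integrable_mult_right integrable_sum integrable_add) auto
  define path where "path = eps_path D g W1 eta n T i"
  have path_eq: "path = (\<Sum>t\<in>{1..T}. eta t * (\<integral>S. (h t S)\<^sup>2 \<partial>M))"
    unfolding path_def eps_path_def h_def M_def ..
  have path0: "path \<ge> 0" unfolding path_eq using eta_nn by (intro sum_nonneg mult_nonneg_nonneg integral_nonneg) auto
  have R_E: "(\<integral>x. R x \<partial>N) = 4 * Wt * path / (real n)\<^sup>2"
  proof -
    have "(\<integral>x. R x \<partial>N) = 2 * Wt / (real n)\<^sup>2 * (\<Sum>t\<in>{1..T}. eta t * ((\<integral>x. (h t (rs x))\<^sup>2 \<partial>N) + (\<integral>x. (h t (rs (sw x)))\<^sup>2 \<partial>N)))"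
      unfolding R_def using hh_int hh2_int by (simp add: integral_sum)
    also have "\<dots> = 2 * Wt / (real n)\<^sup>2 * (\<Sum>t\<in>{1..T}. 2 * (eta t * (\<integral>S. (h t S)\<^sup>2 \<partial>M)))"
      unfolding hh_E hh2_E by (simp add: mult_ac)
    also have "\<dots> = 4 * Wt * path / (real n)\<^sup>2"
      unfolding path_eq by (simp add: sum_distrib_left[symmetric])
    finally show ?thesis .
  qed
  have R0: "R x \<ge> 0" for x using Pt3[of x] by (smt (verit) zero_le_power2)
  have dl2_m: "(\<lambda>x. (dl x)\<^sup>2) \<in> borel_measurable N" using dl_m by measurable
  have aA2_m: "(\<lambda>x. (aA x)\<^sup>2) \<in> borel_measurable N" using aA_m by measurable
  have aAdl_m: "(\<lambda>x. aA x * dl x) \<in> borel_measurable N" using aA_m dl_m by measurable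
  have dl2_int: "integrable N (\<lambda>x. (dl x)\<^sup>2)"
    by (rule Bochner_Integration.integrable_bound[OF R_int dl2_m]) (use Pt3 R0 in auto)
  have aA2_int: "integrable N (\<lambda>x. (aA x)\<^sup>2)"
    by (rule Bochner_Integration.integrable_bound[OF integrable_mult_right[OF Q_int, of "4 * beta"] aA2_m])
      (use Pt2 Pt4 beta_pos in auto)
  have aAdl_le: "aA x * dl x \<le> (l * (aA x)\<^sup>2 + (dl x)\<^sup>2 / l) / 2" if l: "l > 0" for x l
  proof -
    have "0 \<le> (l * aA x - dl x)\<^sup>2 / l" using l by simp
    also have "(l * aA x - dl x)\<^sup>2 / l = l * (aA x)\<^sup>2 + (dl x)\<^sup>2 / l - 2 * (aA x * dl x)"
      using l by (simp add: power2_eq_square field_simps)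
    finally show ?thesis by simp
  qed
  have aAdl_int: "integrable N (\<lambda>x. aA x * dl x)"
  proof (rule Bochner_Integration.integrable_bound[OF _ aAdl_m])
    show "integrable N (\<lambda>x. (1 * (aA x)\<^sup>2 + (dl x)\<^sup>2 / 1) / 2)"
      using aA2_int dl2_int by auto
    show "AE x in N. norm (aA x * dl x) \<le> norm ((1 * (aA x)\<^sup>2 + (dl x)\<^sup>2 / 1) / 2)"
      using aAdl_le[of 1] unfolding aA_def dl_def by (auto simp: abs_mult)
  qed
  define Gb where "Gb x = aA x * dl x + beta * (dl x)\<^sup>2" for x
  have Gb_int: "integrable N Gb" unfolding Gb_def using aAdl_int dl2_int by auto
  have P_int: "integrable N P"
  proof (rule Bochner_Integration.integrable_bound[OF _ P_m])
    show "integrable N (\<lambda>x. Q x + Gb x)" using Q_int Gb_int by auto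
    show "AE x in N. norm (P x) \<le> norm (Q x + Gb x)"
    proof (rule AE_I2)
      fix x
      have "P x \<le> Q x + Gb x" using Pt1[of x] unfolding Gb_def by linarith
      moreover have "Gb x \<ge> 0" unfolding Gb_def aA_def dl_def using beta_pos by simp
      ultimately show "norm (P x) \<le> norm (Q x + Gb x)" using Pt4[of x] by simp
    qed
  qed
  define p where "p y = f (A (rs y)) (y n)" for y
  have p_m': "p \<in> borel_measurable N" unfolding p_def by (rule p_m)
  have Pp: "P x = p (sw x)" for x unfolding P_def p_def sw_n ..
  have p_int: "integrable N p" using swI[OF p_m'] P_int unfolding Pp by simp
  have E_pop: "(\<integral>S. pop_risk D f (A S) \<partial>M) = (\<integral>x. P x \<partial>N)"
  proof -
    have "(\<integral>x. P x \<partial>N) = (\<integral>x. p x \<partial>N)" unfolding Pp by (rule swE[OF p_m'])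
    also have "\<dots> = (\<integral>x. (\<integral>y. p (x(n := y)) \<partial>D) \<partial>Pi\<^sub>M {..<n} (\<lambda>_. D))"
    proof -
      have NN: "N = Pi\<^sub>M (insert n {..<n}) (\<lambda>_. D)" unfolding N_def lessThan_Suc ..
      show ?thesis using p_int unfolding NN by (intro PS.product_integral_insert) auto
    qed
    also have "\<dots> = (\<integral>S. pop_risk D f (A S) \<partial>M)"
      unfolding M_eq
    proof (rule Bochner_Integration.integral_cong[OF refl])
      fix x assume x: "x \<in> space (Pi\<^sub>M {..<n} (\<lambda>_. D))"
      have "rs (x(n := y)) = x" for y
      proof -
        have "rs (x(n := y)) = restrict x {..<n}" unfolding rs_def by (auto simp: restrict_def)
        also have "\<dots> = x" using x by (simp add: space_PiM)
        finally show ?thesis .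
      qed
      then show "(\<integral>y. p (x(n := y)) \<partial>D) = pop_risk D f (A x)"
        unfolding p_def pop_risk_def by simp
    qed
    finally show ?thesis ..
  qed
  have gen_eq: "eps_gen D f g W1 eta n T = (\<integral>x. P x - Q x \<partial>N)"
  proof -
    have int_pop': "integrable M (\<lambda>S. pop_risk D f (A S))" using int_pop unfolding A_out M_def .
    have "eps_gen D f g W1 eta n T = (\<integral>S. pop_risk D f (A S) - emp_risk f n S (A S) \<partial>M)"
      unfolding eps_gen_def A_out M_def ..
    also have "\<dots> = (\<integral>S. pop_risk D f (A S) \<partial>M) - (\<integral>S. emp_risk f n S (A S) \<partial>M)"
      using int_pop' int_emp' by simp
    also have "\<dots> = (\<integral>x. P x \<partial>N) - (\<integral>x. Q x \<partial>N)" unfolding E_pop E_emp Q_E ..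
    also have "\<dots> = (\<integral>x. P x - Q x \<partial>N)" using P_int Q_int by simp
    finally show ?thesis .
  qed
  define optc where "optc = eps_opt D f g W1 eta n T wstar + eps_c D f n wstar"
  have optc_eq: "optc = (\<integral>x. Q x \<partial>N)"
  proof -
    have int_star': "integrable M (\<lambda>S. emp_risk f n S (wstar S))" using int_star unfolding M_def .
    have "optc = (\<integral>S. emp_risk f n S (A S) \<partial>M) - (\<integral>S. emp_risk f n S (wstar S) \<partial>M) + (\<integral>S. emp_risk f n S (wstar S) \<partial>M)"
      unfolding optc_def eps_opt_def eps_c_def A_out M_def[symmetric] using int_emp' int_star' by simp
    then show ?thesis unfolding E_emp Q_E by simp
  qed
  have optc0: "optc \<ge> 0" unfolding optc_eq using Pt4 by simp
  have abs_gen: "\<bar>eps_gen D f g W1 eta n T\<bar> \<le> (\<integral>x. Gb x \<partial>N)"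
  proof -
    have "(\<integral>x. P x - Q x \<partial>N) \<le> (\<integral>x. Gb x \<partial>N)"
      using P_int Q_int Gb_int Pt1 unfolding Gb_def by (intro integral_mono) (auto simp: abs_le_iff)
    moreover have "(\<integral>x. Q x - P x \<partial>N) \<le> (\<integral>x. Gb x \<partial>N)"
      using P_int Q_int Gb_int Pt1 unfolding Gb_def by (intro integral_mono) (auto simp: abs_le_iff)
    moreover have "(\<integral>x. Q x - P x \<partial>N) = - (\<integral>x. P x - Q x \<partial>N)" using P_int Q_int by simp
    ultimately show ?thesis unfolding gen_eq by (simp add: abs_le_iff)
  qed
  have I_aA2: "(\<integral>x. (aA x)\<^sup>2 \<partial>N) \<le> 4 * beta * optc"
  proof -
    have "(\<integral>x. (aA x)\<^sup>2 \<partial>N) \<le> (\<integral>x. 4 * beta * Q x \<partial>N)"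
      using aA2_int Q_int Pt2 by (intro integral_mono) auto
    then show ?thesis unfolding optc_eq by simp
  qed
  have I_dl2: "(\<integral>x. (dl x)\<^sup>2 \<partial>N) \<le> 4 * Wt * path / (real n)\<^sup>2"
    unfolding R_E[symmetric] using dl2_int R_int Pt3 by (intro integral_mono) auto
  have I_aAdl: "(\<integral>x. aA x * dl x \<partial>N) \<le> sqrt ((\<integral>x. (aA x)\<^sup>2 \<partial>N) * (\<integral>x. (dl x)\<^sup>2 \<partial>N))"
  proof (rule sqrt_trick)
    show "0 \<le> (\<integral>x. (aA x)\<^sup>2 \<partial>N)" "0 \<le> (\<integral>x. (dl x)\<^sup>2 \<partial>N)" by simp_all
    fix l :: real assume l: "l > 0"
    have "(\<integral>x. aA x * dl x \<partial>N) \<le> (\<integral>x. (l * (aA x)\<^sup>2 + (dl x)\<^sup>2 / l) / 2 \<partial>N)"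
      using aAdl_int aA2_int dl2_int aAdl_le[OF l] by (intro integral_mono) auto
    also have "\<dots> = (l * (\<integral>x. (aA x)\<^sup>2 \<partial>N) + (\<integral>x. (dl x)\<^sup>2 \<partial>N) / l) / 2"
      using aA2_int dl2_int by simp
    finally show "(\<integral>x. aA x * dl x \<partial>N) \<le> (l * (\<integral>x. (aA x)\<^sup>2 \<partial>N) + (\<integral>x. (dl x)\<^sup>2 \<partial>N) / l) / 2" .
  qed
  have gen_bound: "\<bar>eps_gen D f g W1 eta n T\<bar> \<le> sqrt (4 * beta * optc * (4 * Wt * path / (real n)\<^sup>2)) + beta * (4 * Wt * path / (real n)\<^sup>2)"
  proof -
    have "(\<integral>x. Gb x \<partial>N) = (\<integral>x. aA x * dl x \<partial>N) + beta * (\<integral>x. (dl x)\<^sup>2 \<partial>N)"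
      unfolding Gb_def using aAdl_int dl2_int by simp
    also have "\<dots> \<le> sqrt ((\<integral>x. (aA x)\<^sup>2 \<partial>N) * (\<integral>x. (dl x)\<^sup>2 \<partial>N)) + beta * (4 * Wt * path / (real n)\<^sup>2)"
      using I_aAdl I_dl2 beta_pos by (intro add_mono mult_left_mono) auto
    also have "sqrt ((\<integral>x. (aA x)\<^sup>2 \<partial>N) * (\<integral>x. (dl x)\<^sup>2 \<partial>N)) \<le> sqrt (4 * beta * optc * (4 * Wt * path / (real n)\<^sup>2))"
      using I_aA2 I_dl2 optc0 beta_pos by (intro real_sqrt_le_mono mult_mono) auto
    finally show ?thesis using abs_gen by linarith
  qed
  have bW: "beta * Wt \<le> real T powr (2 * (beta * C)) * cbar (beta * C) T"
    unfolding Wt_def pp_def using beta_pos C_pos T eta by (intro W_bound) auto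
  have cb: "cbar (beta * C) T \<ge> 0" "cbar (beta * C) T \<le> 3/2"
  proof -
    have "ln (exp 1 * real T) \<ge> 1" using T by (simp add: ln_mult)
    then have "beta * C * ln (exp 1 * real T) \<ge> 0" using beta_pos C_pos by simp
    then show "cbar (beta * C) T \<ge> 0" "cbar (beta * C) T \<le> 3/2"
      unfolding cbar_def using beta_pos C_pos eps_lt by (auto simp: min_def)
  qed
  note fin = final_alg[OF gen_bound bW optc0 path0 cb beta_pos n T]
  have eps0: "beta * C \<ge> 0" using beta_pos C_pos by simp
  show ?thesis unfolding Let_def optc_def[symmetric] path_def[symmetric] by (rule fin[OF eps0])
qed

end
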